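(* Assume $t_m=1$. Let $y\in\mathbb Z_\beta^+$ have β-expansion $y_ny_{n-1}\cdots y_k0^k\bullet$ with $y_k\ne0$, $k\in\mathbb N$. Then $y-{\rm pred}(y)=T_\beta^{k'}(1)$, where $k'\in\{0,1,\dots,m-1\}$ satisfies $k'\equiv k\pmod m$.
   Context: $\beta>1$ is a simple Parry number with $d_\beta(1)=t_1\cdots t_{m-1}t_m$ ($m\ge2$, $t_1\ge1$, $t_m\ge1$, satisfying the Parry condition). The β-expansion of $x>0$ is the greedy expansion $x=\sum_{i\le k}x_i\beta^i$; we write $x=x_k\cdots x_0\bullet$ when $x_i=0$ for $i<0$, and such $x$ (together with $0$) form $\mathbb Z_\beta^+$, the non-negative β-integers. A finite string $x_k\cdots x_0$ over $\{0,\dots,\lceil\beta\rceil-1\}$ is the β-expansion of a β-integer iff each suffix $x_ix_{i-1}\cdots x_0$ ($i\le k$) is lexicographically strictly smaller than $d_\beta(1)$. $\mathbb Z_\beta=\mathbb Z_\beta^+\cup(-\mathbb Z_\beta^+)$, ${\rm pred}(x)=\max\{y\in\mathbb Z_\beta: y<x\}$. $T_\beta(x)=\beta x\bmod 1$, and $T_\beta^i(1)=\sum_{j=i+1}^m t_j\beta^{i-j}$ for $0\le i\le m-1$. *)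

theory Defs
  imports Complex_Main
begin

definition beta_T :: "real \<Rightarrow> real \<Rightarrow> real" where
  "beta_T \<beta> x = \<beta> * x - of_int \<lfloor>\<beta> * x\<rfloor>"

definition renyi_digit :: "real \<Rightarrow> nat \<Rightarrow> int" where
  "renyi_digit \<beta> i = \<lfloor>\<beta> * (beta_T \<beta> ^^ (i - 1)) 1\<rfloor>"

text \<open>Greedy (beta-)expansion of x > 0: with e = floor(log_beta x), so that
  beta^e <= x < beta^(e+1), write z = x / beta^(e+1) in [0,1); the digit of x
  at position i (i <= e) is the (e+1-i)-th greedy digit of z, namely
  floor(beta T^(e-i)(z)); digits at positions i > e are 0.\<close>
definition beta_digit :: "real \<Rightarrow> real \<Rightarrow> int \<Rightarrow> int" where
  "beta_digit \<beta> x i =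
     (let e = \<lfloor>log \<beta> x\<rfloor>; z = x / \<beta> powr (of_int (e + 1)) in
      if i > e then 0 else \<lfloor>\<beta> * (beta_T \<beta> ^^ nat (e - i)) z\<rfloor>)"

definition beta_int_pos :: "real \<Rightarrow> real set" where
  "beta_int_pos \<beta> = {0} \<union> {x. x > 0 \<and> (\<forall>i::int. i < 0 \<longrightarrow> beta_digit \<beta> x i = 0)}"

definition beta_int :: "real \<Rightarrow> real set" where
  "beta_int \<beta> = beta_int_pos \<beta> \<union> uminus ` beta_int_pos \<beta>"

definition beta_pred :: "real \<Rightarrow> real \<Rightarrow> real" where
  "beta_pred \<beta> x = (GREATEST y. y \<in> beta_int \<beta> \<and> y < x)"

end

theory Submission imports Defs begin

lemma T_range: "0 \<le> beta_T b x \<and> beta_T b x < 1"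
  unfolding beta_T_def by linarith

lemma T_decomp: "b * x = of_int \<lfloor>b*x\<rfloor> + beta_T b x"
  unfolding beta_T_def by simp

lemma T_step: "of_int n \<le> b*x \<Longrightarrow> b*x < of_int n + 1 \<Longrightarrow> beta_T b x = b*x - of_int n"
  unfolding beta_T_def by (metis floor_unique)

lemma T_le: "0 \<le> x \<Longrightarrow> 0 \<le> b \<Longrightarrow> beta_T b x \<le> b*x"
  unfolding beta_T_def by simp

lemma T_nonneg_iter: "0 \<le> u \<Longrightarrow> 0 \<le> (beta_T b ^^ n) u"
  by (cases n) (auto simp: T_range)

lemma T_zero_iter: "(beta_T b ^^ n) 0 = 0"
  by (induction n) (auto simp: beta_T_def)

lemma T_small_iter:
  assumes "b > 1" "0 \<le> u" "b^n * u < 1"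
  shows "(beta_T b ^^ n) u = b^n * u"
  using assms(3)
proof (induction n)
  case 0 then show ?case by simp
next
  case (Suc n)
  have le: "b^n * u \<le> b^Suc n * u"
    using assms by (simp add: mult_right_mono)
  then have IH: "(beta_T b ^^ n) u = b^n*u" using Suc by linarith
  have "beta_T b (b^n*u) = b * (b^n*u) - of_int 0"
    apply (rule T_step) using Suc assms by (auto simp: mult.assoc[symmetric])
  then show ?case using IH by (simp add: mult.assoc)
qed

lemma T_iter_le:
  assumes "b > 1" "0 \<le> u"
  shows "(beta_T b ^^ (a + n)) u \<le> b^a * (beta_T b ^^ n) u"
proof (induction a)
  case 0 then show ?case by simp
next
  case (Suc a)
  have "(beta_T b ^^ (Suc a + n)) u = beta_T b ((beta_T b ^^ (a + n)) u)" by simp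
  also have "\<dots> \<le> b * (beta_T b ^^ (a + n)) u"
    using T_le T_nonneg_iter assms by (metis less_le_not_le order_less_trans zero_less_one)
  also have "\<dots> \<le> b * (b^a * (beta_T b ^^ n) u)"
    using Suc assms by simp
  finally show ?case by (simp add: mult.assoc)
qed

lemma T_zero_from_digits:
  assumes "b > 1" "0 \<le> u" "\<forall>j\<ge>J. \<lfloor>b * (beta_T b ^^ j) u\<rfloor> = 0"
  shows "(beta_T b ^^ J) u = 0"
proof -
  define a where "a = (beta_T b ^^ J) u"
  have a0: "0 \<le> a" unfolding a_def using T_nonneg_iter assms by blast
  have it: "(beta_T b ^^ (n + J)) u = b^n * a" for n
  proof (induction n)
    case 0 then show ?case by (simp add: a_def)
  next
    case (Suc n)
    have "(beta_T b ^^ (Suc n + J)) u = beta_T b ((beta_T b ^^ (n + J)) u)" by simp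
    also have "\<dots> = b * (beta_T b ^^ (n + J)) u"
      using T_decomp[of b "(beta_T b ^^ (n + J)) u"] assms(3) by simp
    finally show ?case using Suc by simp
  qed
  have lt: "b^n * a < 1" for n
  proof -
    have "\<lfloor>b * (beta_T b ^^ (n + J)) u\<rfloor> = 0" using assms(3) by simp
    then have "b * (beta_T b ^^ (n + J)) u < 1" by linarith
    then have "b^Suc n * a < 1" using it[of n] by (simp add: mult.assoc)
    moreover have "b^n * a \<le> b^Suc n * a" using a0 assms(1) by (simp add: mult_right_mono)
    ultimately show ?thesis by linarith
  qed
  show ?thesis
  proof (rule ccontr)
    assume "(beta_T b ^^ J) u \<noteq> 0"
    then have "a > 0" using a0 a_def by auto
    then obtain n where "1/a < b^n" using real_arch_pow assms(1) by blast
    then have "1 < b^n * a" using \<open>a>0\<close> by (simp add: field_simps)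
    then show False using lt[of n] by simp
  qed
qed


definition fper :: "real \<Rightarrow> nat \<Rightarrow> nat \<Rightarrow> real" where
  "fper b m i = (beta_T b ^^ (i mod m)) 1"

context
  fixes b :: real and m :: nat
  assumes b1: "b > 1" and m2: "m \<ge> 2"
    and Tm: "(beta_T b ^^ m) 1 = 0"
    and Tnz: "\<forall>j. 1 \<le> j \<and> j < m \<longrightarrow> (beta_T b ^^ j) 1 \<noteq> 0"
    and tm: "renyi_digit b m = 1"
begin

lemma f_pos: "0 < fper b m i \<and> fper b m i \<le> 1"
proof (cases "i mod m = 0")
  case True then show ?thesis by (simp add: fper_def)
next
  case False
  then have "(beta_T b ^^ (i mod m)) 1 \<noteq> 0" using Tnz m2 by auto
  moreover obtain j where "i mod m = Suc j" using False not0_implies_Suc by blast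
  ultimately show ?thesis using T_range[of b] by (auto simp: fper_def less_le)
qed

lemma f_step: "\<exists>d::int. d \<ge> 0 \<and> b * fper b m i = of_int d + fper b m (Suc i)"
proof (cases "Suc (i mod m) = m")
  case True
  then have s0: "Suc i mod m = 0" by (simp add: mod_Suc)
  have "b * (beta_T b ^^ (m-1)) 1 = of_int \<lfloor>b * (beta_T b ^^ (m-1)) 1\<rfloor> + beta_T b ((beta_T b ^^ (m-1)) 1)"
    by (rule T_decomp)
  also have "beta_T b ((beta_T b ^^ (m-1)) 1) = (beta_T b ^^ m) 1"
    using m2 by (metis Suc_diff_1 funpow.simps(2) less_le_trans o_apply pos2)
  also have "\<lfloor>b * (beta_T b ^^ (m-1)) 1\<rfloor> = 1" using tm by (simp add: renyi_digit_def)
  finally have "b * (beta_T b ^^ (m-1)) 1 = 1" using Tm by simp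
  then have "b * fper b m i = of_int 0 + fper b m (Suc i)"
    using True s0 by (simp add: fper_def Suc_diff_Suc[symmetric] flip: One_nat_def) (metis One_nat_def diff_Suc_1)
  then show ?thesis by blast
next
  case False
  then have s: "Suc i mod m = Suc (i mod m)" by (simp add: mod_Suc)
  have "b * fper b m i = of_int \<lfloor>b * fper b m i\<rfloor> + fper b m (Suc i)"
    using T_decomp[of b "fper b m i"] s by (simp add: fper_def)
  moreover have "\<lfloor>b * fper b m i\<rfloor> \<ge> 0" using f_pos[of i] b1 by simp
  ultimately show ?thesis by blast
qed

lemma f_mono: "fper b m (i + d) \<le> b^d * fper b m i"
proof (induction d)
  case 0 then show ?case by simp
next
  case (Suc d)
  obtain e :: int where e: "e \<ge> 0" "b * fper b m (i+d) = of_int e + fper b m (Suc (i+d))"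
    using f_step by blast
  have "fper b m (i + Suc d) \<le> b * fper b m (i+d)" using e by simp
  also have "\<dots> \<le> b * (b^d * fper b m i)" using Suc b1 by simp
  finally show ?case by (simp add: mult.assoc)
qed

lemma lemB: "j \<le> s \<Longrightarrow> (beta_T b ^^ j) (1 - fper b m s / b^s) = fper b m j - fper b m s / b^(s-j)"
proof (induction j)
  case 0 then show ?case by (simp add: fper_def)
next
  case (Suc j)
  then have IH: "(beta_T b ^^ j) (1 - fper b m s / b^s) = fper b m j - fper b m s / b^(s-j)" by simp
  obtain d :: int where d: "d \<ge> 0" "b * fper b m j = of_int d + fper b m (Suc j)"
    using f_step by blast
  have sj: "s - j = Suc (s - Suc j)" using Suc by simp
  have eq: "b * (fper b m j - fper b m s / b^(s-j)) = of_int d + (fper b m (Suc j) - fper b m s / b^(s - Suc j))"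
  proof -
    have d': "fper b m j = (of_int d + fper b m (Suc j)) / b" using d b1 by (simp add: field_simps)
    show ?thesis unfolding d' using b1 sj by (simp add: field_simps)
  qed
  have "fper b m s \<le> b^(s - Suc j) * fper b m (Suc j)"
    using f_mono[of "Suc j" "s - Suc j"] Suc by simp
  then have ge: "fper b m s / b^(s - Suc j) \<le> fper b m (Suc j)"
    using b1 by (simp add: divide_le_eq mult.commute)
  have gt: "fper b m s / b^(s - Suc j) > 0" using f_pos[of s] b1 by simp
  have "beta_T b (fper b m j - fper b m s / b^(s-j)) = fper b m (Suc j) - fper b m s / b^(s - Suc j)"
    apply (subst T_step[where n=d]) using eq ge gt f_pos[of "Suc j"] by auto
  then show ?case using IH by simp
qed

lemma lemA: "\<forall>i u. u < fper b m i \<longrightarrow> (beta_T b ^^ s) u = 0 \<longrightarrow> u \<le> fper b m i - fper b m (i + s) / b^s"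
proof (induction s)
  case 0 then show ?case by simp
next
  case (Suc s)
  show ?case
  proof (intro allI impI)
    fix i u assume u: "u < fper b m i" and z: "(beta_T b ^^ Suc s) u = 0"
    obtain d :: int where d: "d \<ge> 0" "b * fper b m i = of_int d + fper b m (Suc i)"
      using f_step by blast
    define c where "c = \<lfloor>b*u\<rfloor>"
    have bu: "b*u = of_int c + beta_T b u" unfolding c_def by (rule T_decomp)
    have "b*u < b * fper b m i" using u b1 by simp
    then have "b*u < of_int d + 1" using d f_pos[of "Suc i"] by linarith
    then have cd: "c \<le> d" unfolding c_def by linarith
    have zz: "(beta_T b ^^ s) (beta_T b u) = 0" using z by (simp add: funpow_Suc_right del: funpow.simps)
    have fm: "fper b m (Suc i + s) / b^s \<le> fper b m (Suc i)"
      using f_mono[of "Suc i" s] b1 by (simp add: divide_le_eq mult.commute)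
    have rhs: "fper b m i - fper b m (i + Suc s) / b ^ Suc s = (of_int d + fper b m (Suc i) - fper b m (Suc i + s) / b^s) / b"
    proof -
      have d': "fper b m i = (of_int d + fper b m (Suc i)) / b" using d b1 by (simp add: field_simps)
      show ?thesis unfolding d' using b1 by (simp add: field_simps)
    qed
    show "u \<le> fper b m i - fper b m (i + Suc s) / b ^ Suc s"
    proof (cases "c = d")
      case True
      then have "beta_T b u < fper b m (Suc i)" using bu \<open>b*u < b * fper b m i\<close> d by linarith
      then have "beta_T b u \<le> fper b m (Suc i) - fper b m (Suc i + s) / b^s"
        using Suc.IH zz by blast
      then have "b*u \<le> of_int d + fper b m (Suc i) - fper b m (Suc i + s) / b^s" using bu True by linarith
      then show ?thesis unfolding rhs using b1 by (simp add: le_divide_eq mult.commute)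
    next
      case False
      then have "b*u < of_int d" using cd bu T_range[of b u] by linarith
      then have "b*u \<le> of_int d + fper b m (Suc i) - fper b m (Suc i + s) / b^s" using fm by linarith
      then show ?thesis unfolding rhs using b1 by (simp add: le_divide_eq mult.commute)
    qed
  qed
qed

end


lemma floor_log_bounds:
  assumes "b > 1" "x > 0"
  shows "b powr of_int \<lfloor>log b x\<rfloor> \<le> x \<and> x < b powr (of_int \<lfloor>log b x\<rfloor> + 1)"
proof -
  have x: "x = b powr (log b x)" using assms by simp
  have "b powr of_int \<lfloor>log b x\<rfloor> \<le> b powr (log b x)" using assms by (intro powr_mono) auto
  moreover have "b powr (log b x) < b powr (of_int \<lfloor>log b x\<rfloor> + 1)" using assms by (intro powr_less_mono) linarith+
  ultimately show ?thesis using x by simp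
qed

lemma pow_shift:
  assumes "b > 1"
  shows "b^n * (x / b^N) = x * b powr (real n - real N)"
  using assms by (simp add: powr_diff powr_realpow)

lemma DIG:
  assumes b: "b > 1" and x: "0 < x" "x < b^N" and i: "i < int N"
  shows "beta_digit b x i = \<lfloor>b * (beta_T b ^^ nat (int N - 1 - i)) (x / b^N)\<rfloor>"
proof -
  define e where "e = \<lfloor>log b x\<rfloor>"
  define u where "u = x / b^N"
  have u0: "0 \<le> u" using x b by (simp add: u_def)
  have eb: "b powr of_int e \<le> x" "x < b powr (of_int e + 1)"
    using floor_log_bounds[OF b x(1)] e_def by auto
  have "b powr of_int e < b powr real N" using eb x b by (simp add: powr_realpow)
  then have eN: "e < int N" using b by simp
  show ?thesis
  proof (cases "i > e")
    case True
    then have dig: "beta_digit b x i = 0" by (simp add: beta_digit_def e_def Let_def)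
    define n where "n = nat (int N - 1 - i)"
    have nr: "real n = real N - 1 - of_int i" using i by (simp add: n_def)
    have bn: "b^n * u = x * b powr (- 1 - of_int i)"
      unfolding u_def using pow_shift[OF b] nr by simp
    have "x * b powr (- 1 - of_int i) < b powr (of_int e + 1) * b powr (- 1 - of_int i)"
      using eb x b by simp
    also have "\<dots> = b powr (of_int e - of_int i)" using b by (simp add: powr_add[symmetric])
    also have "\<dots> \<le> b powr 0" using True b by (intro powr_mono) auto
    finally have lt1: "b^n * u < 1" using bn b by simp
    have T: "(beta_T b ^^ n) u = b^n * u"
      by (rule T_small_iter[OF b u0 lt1])
    have "b * (b^n * u) < 1"
    proof -
      have "b * (x * b powr (- 1 - of_int i)) = x * b powr (- of_int i)"
        using b by (simp add: powr_diff powr_minus field_simps)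
      also have "\<dots> < b powr (of_int e + 1) * b powr (- of_int i)" using eb b by simp
      also have "\<dots> = b powr (of_int e + 1 - of_int i)" using b by (simp add: powr_add[symmetric])
      also have "\<dots> \<le> b powr 0" using True b by (intro powr_mono) auto
      finally show ?thesis using bn b by simp
    qed
    moreover have "0 \<le> b * (b^n * u)" using b u0 by simp
    ultimately have "\<lfloor>b * (beta_T b ^^ n) u\<rfloor> = 0" using T by (simp add: floor_eq_iff)
    then show ?thesis using dig by (simp add: n_def u_def)
  next
    case False
    define z where "z = x / b powr (of_int (e + 1))"
    have dig: "beta_digit b x i = \<lfloor>b * (beta_T b ^^ nat (e - i)) z\<rfloor>"
      using False by (simp add: beta_digit_def e_def z_def Let_def)
    define M where "M = nat (int N - 1 - e)"
    have Mr: "real M = real N - 1 - of_int e" using eN by (simp add: M_def)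
    have bM: "b^M * u = z"
    proof -
      have "b^M * u = x * b powr (- (of_int e + 1))"
        unfolding u_def using pow_shift[OF b, of M x N] Mr by (simp add: algebra_simps)
      also have "\<dots> = z" unfolding z_def using powr_minus_divide[of b "of_int e + 1"] by simp
      finally show ?thesis .
    qed
    have z1: "z < 1" using eb b by (simp add: z_def)
    have TM: "(beta_T b ^^ M) u = z" using T_small_iter[OF b u0, of M] bM z1 by simp
    have nn: "nat (int N - 1 - i) = nat (e - i) + M" using False eN by (simp add: M_def)
    have "(beta_T b ^^ nat (int N - 1 - i)) u = (beta_T b ^^ nat (e - i)) z"
      unfolding nn funpow_add using TM by simp
    then show ?thesis using dig by (simp add: u_def)
  qed
qed


lemma bint_T:
  assumes b: "b > 1" and x: "x \<in> beta_int_pos b" "0 < x" "x < b^N"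
  shows "(beta_T b ^^ N) (x / b^N) = 0"
proof (rule T_zero_from_digits[OF b])
  show "0 \<le> x / b^N" using x b by simp
  show "\<forall>j\<ge>N. \<lfloor>b * (beta_T b ^^ j) (x / b ^ N)\<rfloor> = 0"
  proof (intro allI impI)
    fix j assume j: "N \<le> j"
    define i where "i = int N - 1 - int j"
    have "i < 0" "i < int N" using j by (auto simp: i_def)
    then have "beta_digit b x i = 0" using x(1,2) by (auto simp: beta_int_pos_def)
    moreover have "nat (int N - 1 - i) = j" by (simp add: i_def)
    ultimately show "\<lfloor>b * (beta_T b ^^ j) (x / b ^ N)\<rfloor> = 0"
      using DIG[OF b x(2,3) \<open>i < int N\<close>] by simp
  qed
qed

lemma T_bint:
  assumes b: "b > 1" and x: "0 < x" "x < b^N" and z: "(beta_T b ^^ N) (x / b^N) = 0"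
  shows "x \<in> beta_int_pos b"
proof -
  have "beta_digit b x i = 0" if i: "i < 0" for i
  proof -
    have iN: "i < int N" using i by simp
    have nn: "nat (int N - 1 - i) = nat (- 1 - i) + N" using i by simp
    show ?thesis using DIG[OF b x iN] unfolding nn funpow_add using z T_zero_iter by simp
  qed
  then show ?thesis using x by (auto simp: beta_int_pos_def)
qed

lemma digit_zero: "beta_digit b 0 i = 0"
  by (simp add: beta_digit_def Let_def T_zero_iter)


lemma T_lt1: "u < 1 \<Longrightarrow> (beta_T b ^^ n) u < 1"
  by (cases n) (auto simp: T_range)

theorem lemma3p21:
  fixes \<beta> y :: real and m k :: nat
  assumes "\<beta> > 1"
    and "m \<ge> 2"
    and "(beta_T \<beta> ^^ m) 1 = 0"
    and "\<forall>j. 1 \<le> j \<and> j < m \<longrightarrow> (beta_T \<beta> ^^ j) 1 \<noteq> 0"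
    and "renyi_digit \<beta> m = 1"
    and "y \<in> beta_int_pos \<beta>"
    and "beta_digit \<beta> y (int k) \<noteq> 0"
    and "\<forall>i::int. i < int k \<longrightarrow> beta_digit \<beta> y i = 0"
  shows "y - beta_pred \<beta> y = (beta_T \<beta> ^^ (k mod m)) 1"
proof -
  note b = assms(1)
  note fpos = f_pos[OF assms(1-5)]
  note lA = lemA[OF assms(1-5)]
  note lB = lemB[OF assms(1-5)]
  define T where "T = beta_T \<beta>"
  define g where "g = fper \<beta> m k"
  have g: "0 < g" "g \<le> 1" using fpos[of k] by (auto simp: g_def)
  have ypos: "y > 0"
  proof -
    have "y = 0 \<or> y > 0" using assms(6) by (auto simp: beta_int_pos_def)
    moreover have "y \<noteq> 0" using assms(7) digit_zero by metis
    ultimately show ?thesis by blast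
  qed
  obtain n0 where n0: "y < \<beta>^n0" using real_arch_pow[OF b] by blast
  define N where "N = n0 + k + 1"
  have yN: "y < \<beta>^N"
    using n0 power_increasing[of n0 N \<beta>] b by (simp add: N_def)
  define v where "v = y / \<beta>^N"
  define p where "p = N - k"
  have p1: "p \<ge> 1" and Nkp: "N = k + p" by (auto simp: p_def N_def)
  have v0: "0 \<le> v" using ypos b by (simp add: v_def)
  have v1: "v < 1" using yN b by (simp add: v_def)
  have Tge0: "0 \<le> (T ^^ j) u" if "0 \<le> u" for j u using T_nonneg_iter that T_def by simp
  define a where "a = \<lfloor>\<beta> * (T ^^ (p - 1)) v\<rfloor>"
  have a1: "a \<ge> 1"
  proof -
    have "int k < int N" by (simp add: N_def)
    moreover have "nat (int N - 1 - int k) = p - 1" by (simp add: N_def p_def)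
    ultimately have "beta_digit \<beta> y (int k) = a" using DIG[OF b ypos yN]
      by (simp add: a_def T_def v_def)
    then have "a \<noteq> 0" using assms(7) by simp
    moreover have "a \<ge> 0" unfolding a_def using Tge0[OF v0] b by simp
    ultimately show ?thesis by simp
  qed
  have Tp: "(T ^^ p) v = 0"
    unfolding T_def
  proof (rule T_zero_from_digits[OF b v0], intro allI impI)
    fix j assume j: "p \<le> j"
    define i where "i = int N - 1 - int j"
    have "i < int k" "i < int N" using j p1 by (auto simp: i_def p_def)
    then have "beta_digit \<beta> y i = 0" using assms(8) by auto
    moreover have "nat (int N - 1 - i) = j" by (simp add: i_def)
    ultimately show "\<lfloor>\<beta> * (beta_T \<beta> ^^ j) v\<rfloor> = 0"
      using DIG[OF b ypos yN \<open>i < int N\<close>] by (simp add: v_def)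
  qed
  have bTp1: "1 \<le> \<beta> * (T ^^ (p - 1)) v" using a1 unfolding a_def by linarith
  have low: "1 \<le> \<beta>^(p - j) * (T ^^ j) v" if j: "j < p" for j
  proof -
    have "(T ^^ ((p - 1 - j) + j)) v \<le> \<beta>^(p - 1 - j) * (T ^^ j) v"
      unfolding T_def by (rule T_iter_le[OF b v0])
    moreover have "(p - 1 - j) + j = p - 1" using j by simp
    ultimately have "\<beta> * (T ^^ (p - 1)) v \<le> \<beta> * (\<beta>^(p - 1 - j) * (T ^^ j) v)" using b by simp
    moreover have "\<beta>^(p - j) = \<beta> * \<beta>^(p - 1 - j)" using j by (simp add: power_Suc[symmetric] Suc_diff_Suc)
    ultimately show ?thesis using bTp1 by (simp add: mult.assoc)
  qed
  have bk: "1 \<le> \<beta>^k" using b by simp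
  have y1: "\<beta>^k \<le> y"
  proof -
    have "y = \<beta>^k * (\<beta>^p * v)" using b by (simp add: v_def Nkp power_add)
    moreover have "1 \<le> \<beta>^p * v" using low[of 0] p1 by simp
    ultimately show ?thesis using bk by (metis mult_left_mono mult_1_right less_le_trans zero_less_one less_imp_le)
  qed
  define c where "c = y - g"
  have c0: "0 \<le> c" using y1 g bk by (simp add: c_def)
  have cint: "c \<in> beta_int \<beta>"
  proof (cases "c = 0")
    case True then show ?thesis by (simp add: beta_int_def beta_int_pos_def)
  next
    case False
    then have cpos: "c > 0" using c0 by simp
    have cN: "c < \<beta>^N" using yN g by (simp add: c_def)
    define u where "u = c / \<beta>^N"
    have uv: "u = v - g / \<beta>^N" by (simp add: u_def c_def v_def diff_divide_distrib)
    have Ti: "(T ^^ j) u = (T ^^ j) v - g / \<beta>^(N - j)" if "j < p" for j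
      using that
    proof (induction j)
      case 0 then show ?case by (simp add: uv)
    next
      case (Suc j)
      then have IH: "(T ^^ j) u = (T ^^ j) v - g / \<beta>^(N - j)" by simp
      define aj where "aj = \<lfloor>\<beta> * (T ^^ j) v\<rfloor>"
      have dec: "\<beta> * (T ^^ j) v = of_int aj + (T ^^ Suc j) v"
        unfolding aj_def T_def using T_decomp by simp
      have Nj: "\<beta>^(N - j) = \<beta> * \<beta>^(N - Suc j)" using Suc.prems Nkp
        by (simp add: power_Suc[symmetric] Suc_diff_Suc)
      have eq: "\<beta> * ((T ^^ j) v - g / \<beta>^(N - j)) = of_int aj + ((T ^^ Suc j) v - g / \<beta>^(N - Suc j))"
        using dec Nj b by (simp add: right_diff_distrib)
      have lo: "1 \<le> \<beta>^(p - Suc j) * (T ^^ Suc j) v" using low Suc.prems by blast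
      have pw: "\<beta>^(p - Suc j) \<le> \<beta>^(N - Suc j)" using b by (intro power_increasing) (auto simp: Nkp)
      have pp: "0 < \<beta>^(p - Suc j)" using b by simp
      have "g / \<beta>^(N - Suc j) \<le> 1 / \<beta>^(p - Suc j)"
        using g pw pp by (intro frac_le) auto
      also have "\<dots> \<le> (T ^^ Suc j) v" using lo pp by (simp add: divide_le_eq mult.commute)
      finally have ge: "g / \<beta>^(N - Suc j) \<le> (T ^^ Suc j) v" .
      have gt: "0 < g / \<beta>^(N - Suc j)" using g b by simp
      have lt: "(T ^^ Suc j) v < 1" unfolding T_def using T_lt1 v1 by blast
      have "T ((T ^^ j) v - g / \<beta>^(N - j)) = (T ^^ Suc j) v - g / \<beta>^(N - Suc j)"
        unfolding T_def apply (subst T_step[where n=aj])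
        using eq ge gt lt by (auto simp: T_def)
      then show ?case using IH by simp
    qed
    have Tpu: "(T ^^ p) u = 1 - g / \<beta>^k"
    proof -
      have pS: "p = Suc (p - 1)" using p1 by simp
      have A: "(T ^^ (p - 1)) u = (T ^^ (p - 1)) v - g / \<beta>^(Suc k)"
        using Ti[of "p - 1"] p1 Nkp by (simp add: Suc_diff_Suc)
      have dec: "\<beta> * (T ^^ (p - 1)) v = of_int a + (T ^^ p) v"
        unfolding a_def T_def using T_decomp pS by (metis funpow.simps(2) o_apply)
      have eq: "\<beta> * ((T ^^ (p - 1)) v - g / \<beta>^(Suc k)) = of_int (a - 1) + (1 - g / \<beta>^k)"
        using dec Tp b by (simp add: right_diff_distrib)
      have gk: "g / \<beta>^k \<le> 1" using g bk by simp
      have gk0: "0 < g / \<beta>^k" using g b by simp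
      have "(T ^^ p) u = T ((T ^^ (p - 1)) u)" using pS by (metis funpow.simps(2) o_apply)
      also have "\<dots> = T ((T ^^ (p - 1)) v - g / \<beta>^(Suc k))" using A by simp
      also have "\<dots> = 1 - g / \<beta>^k"
        unfolding T_def apply (subst T_step[where n="a - 1"])
        using eq gk gk0 by (auto simp: T_def)
      finally show ?thesis .
    qed
    have "(T ^^ N) u = (T ^^ k) ((T ^^ p) u)" by (simp add: Nkp funpow_add)
    also have "\<dots> = 0" using Tpu lB[of k k] by (simp add: T_def g_def)
    finally have "(beta_T \<beta> ^^ N) (c / \<beta>^N) = 0" by (simp add: T_def u_def)
    from T_bint[OF b cpos cN this] show ?thesis by (simp add: beta_int_def)
  qed
  have cy: "c < y" using g by (simp add: c_def)
  have maxc: "x \<le> c" if x: "x \<in> beta_int \<beta>" "x < y" for x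
  proof (cases "x \<le> 0")
    case True then show ?thesis using c0 by simp
  next
    case False
    then have xpos: "x > 0" by simp
    have xb: "x \<in> beta_int_pos \<beta>" using x(1) xpos by (auto simp: beta_int_def beta_int_pos_def)
    define w where "w = x / \<beta>^N"
    have w0: "0 \<le> w" using xpos b by (simp add: w_def)
    have wv: "w < v" using x(2) b by (simp add: w_def v_def divide_strict_right_mono)
    have TNw: "(T ^^ N) w = 0" unfolding T_def w_def using bint_T[OF b xb xpos] x(2) yN by simp
    have Tlt: "(T ^^ n) v < 1" for n unfolding T_def using T_lt1 v1 by blast
    have diffeq: "(T ^^ Suc n) v - (T ^^ Suc n) w = \<beta> * ((T ^^ n) v - (T ^^ n) w)"
      if "\<lfloor>\<beta> * (T ^^ n) w\<rfloor> = \<lfloor>\<beta> * (T ^^ n) v\<rfloor>" for n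
      using that T_decomp[of \<beta> "(T ^^ n) w"] T_decomp[of \<beta> "(T ^^ n) v"]
      by (simp add: T_def right_diff_distrib)
    have ex: "\<exists>n. \<lfloor>\<beta> * (T ^^ n) w\<rfloor> \<noteq> \<lfloor>\<beta> * (T ^^ n) v\<rfloor>"
    proof (rule ccontr)
      assume "\<not> ?thesis"
      then have all: "\<lfloor>\<beta> * (T ^^ n) w\<rfloor> = \<lfloor>\<beta> * (T ^^ n) v\<rfloor>" for n by blast
      have it: "(T ^^ n) v - (T ^^ n) w = \<beta>^n * (v - w)" for n
        by (induction n) (auto simp: diffeq[OF all] simp del: funpow.simps)
      obtain n where n: "1 / (v - w) < \<beta>^n" using real_arch_pow[OF b] by blast
      then have "1 < \<beta>^n * (v - w)" using wv by (simp add: field_simps)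
      moreover have "(T ^^ n) v - (T ^^ n) w < 1" using Tlt[of n] Tge0[OF w0, of n] by linarith
      ultimately show False using it[of n] by simp
    qed
    define r where "r = (LEAST n. \<lfloor>\<beta> * (T ^^ n) w\<rfloor> \<noteq> \<lfloor>\<beta> * (T ^^ n) v\<rfloor>)"
    have rne: "\<lfloor>\<beta> * (T ^^ r) w\<rfloor> \<noteq> \<lfloor>\<beta> * (T ^^ r) v\<rfloor>"
      unfolding r_def using LeastI_ex[OF ex] .
    have req: "\<lfloor>\<beta> * (T ^^ n) w\<rfloor> = \<lfloor>\<beta> * (T ^^ n) v\<rfloor>" if "n < r" for n
      using not_less_Least[of n "\<lambda>n. \<lfloor>\<beta> * (T ^^ n) w\<rfloor> \<noteq> \<lfloor>\<beta> * (T ^^ n) v\<rfloor>"] that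
      unfolding r_def by blast
    have itr: "(T ^^ n) v - (T ^^ n) w = \<beta>^n * (v - w)" if "n \<le> r" for n
      using that
    proof (induction n)
      case 0 then show ?case by simp
    next
      case (Suc n)
      then show ?case using diffeq[OF req[of n]] by simp
    qed
    have rp: "r < p"
    proof (rule ccontr)
      assume "\<not> r < p"
      then have "(T ^^ p) v - (T ^^ p) w = \<beta>^p * (v - w)" using itr by simp
      moreover have "0 < \<beta>^p * (v - w)" using wv b by simp
      ultimately show False using Tp Tge0[OF w0, of p] by simp
    qed
    have "0 < \<beta>^r * (v - w)" using wv b by simp
    then have "(T ^^ r) w < (T ^^ r) v" using itr[of r] by simp
    then have "\<beta> * (T ^^ r) w < \<beta> * (T ^^ r) v" using b by simp
    then have "\<lfloor>\<beta> * (T ^^ r) w\<rfloor> \<le> \<lfloor>\<beta> * (T ^^ r) v\<rfloor>" by (simp add: floor_mono)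
    then have fl: "\<lfloor>\<beta> * (T ^^ r) w\<rfloor> + 1 \<le> \<lfloor>\<beta> * (T ^^ r) v\<rfloor>" using rne by simp
    define q where "q = Suc r"
    have qp: "q \<le> p" using rp by (simp add: q_def)
    have bq: "\<beta>^q * (v - w) \<ge> 1 + (T ^^ q) v - (T ^^ q) w"
    proof -
      have "\<beta>^q * (v - w) = \<beta> * ((T ^^ r) v - (T ^^ r) w)" using itr[of r] by (simp add: q_def)
      also have "\<dots> = of_int \<lfloor>\<beta> * (T ^^ r) v\<rfloor> + (T ^^ q) v - (of_int \<lfloor>\<beta> * (T ^^ r) w\<rfloor> + (T ^^ q) w)"
        using T_decomp[of \<beta> "(T ^^ r) w"] T_decomp[of \<beta> "(T ^^ r) v"]
        by (simp add: T_def q_def right_diff_distrib)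
      finally show ?thesis using fl by linarith
    qed
    have Tqw1: "(T ^^ q) w < fper \<beta> m 0" unfolding q_def using T_range[of \<beta>] by (simp add: fper_def T_def)
    have Tqw0: "(beta_T \<beta> ^^ (N - q)) ((T ^^ q) w) = 0"
    proof -
      have "N = (N - q) + q" using qp Nkp by simp
      then have "(beta_T \<beta> ^^ N) w = (beta_T \<beta> ^^ (N - q)) ((beta_T \<beta> ^^ q) w)"
        by (metis funpow_add o_apply)
      then show ?thesis using TNw by (simp add: T_def)
    qed
    have Aq: "(T ^^ q) w \<le> 1 - fper \<beta> m (N - q) / \<beta>^(N - q)"
      using spec[OF spec[OF lA[of "N - q"], of 0], of "(T ^^ q) w"] Tqw1 Tqw0 by (simp add: fper_def)
    have "y - x = \<beta>^N * (v - w)" using b by (simp add: v_def w_def right_diff_distrib)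
    also have "\<dots> = \<beta>^(N - q) * (\<beta>^q * (v - w))"
      using qp Nkp by (simp add: power_add[symmetric])
    also have "\<dots> \<ge> \<beta>^(N - q) * ((T ^^ q) v + fper \<beta> m (N - q) / \<beta>^(N - q))"
      using bq Aq b by (intro mult_left_mono) auto
    finally have main: "y - x \<ge> \<beta>^(N - q) * (T ^^ q) v + fper \<beta> m (N - q)"
      using b by (simp add: distrib_left)
    show ?thesis
    proof (cases "q = p")
      case True
      then have "N - q = k" using Nkp by simp
      then show ?thesis using main Tp True by (simp add: c_def g_def)
    next
      case False
      then have qp': "q < p" using qp by simp
      have "\<beta>^(N - q) * (T ^^ q) v = \<beta>^k * (\<beta>^(p - q) * (T ^^ q) v)"
        using qp Nkp by (simp add: power_add[symmetric] mult.assoc)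
      moreover have "1 \<le> \<beta>^(p - q) * (T ^^ q) v" using low[OF qp'] .
      ultimately have "\<beta>^(N - q) * (T ^^ q) v \<ge> 1" using bk
        by (metis mult_le_cancel_left1 less_le_trans zero_less_one order_trans mult_1_right mult_left_mono zero_le_one)
      moreover have "fper \<beta> m (N - q) > 0" using fpos by blast
      ultimately show ?thesis using main g by (simp add: c_def)
    qed
  qed
  have "beta_pred \<beta> y = c"
    unfolding beta_pred_def
    by (rule Greatest_equality) (use cint cy maxc in auto)
  then show ?thesis by (simp add: c_def g_def fper_def)
qed

end
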